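(* Consider the opinion--action model described in the context with $\phi\in(0,1)$ and arbitrary initial values $x_i(0),y_i(0)\in[0,1]$. Suppose there exists a finite time $T>0$ such that for all integers $t\ge T$ the digraph $\mathcal{G}(P(t))$ is strongly connected. Then for every $i\in\{1,\dots,2n\}$ the limit $z_i^\ast=\lim_{t\to\infty}z_i(t)$ exists, and $z_i^\ast=z_j^\ast$ for all $i,j\in\{1,\dots,2n\}$.
   Context: Fix an integer $n\ge 1$, agent set $\mathcal{V}=\{1,\dots,n\}$, a confidence threshold $\epsilon\in[0,1]$ and a decision weight $\phi\in[0,1]$. Each agent $i$ has opinion $x_i(t)\in[0,1]$ and action $y_i(t)\in[0,1]$. For $t\in\mathbb{Z}_{\ge0}$ the model evolves by: $\mathcal{N}_i(t)=\{j\in\mathcal{V}\mid j\neq i,\ |x_i(t)-y_j(t)|\le\epsilon\}$; $x_i(t+1)=\frac{x_i(t)+\sum_{j\in\mathcal{N}_i(t)}y_j(t)}{|\mathcal{N}_i(t)|+1}$; $y_i(t+1)=\phi\,x_i(t+1)+(1-\phi)\,y_{\mathrm{avg}}(t)$ with $y_{\mathrm{avg}}(t)=\frac1n\sum_{k=1}^n y_k(t)$. For $t\ge1$ the augmented state is $\mathbf{z}(t)\in\mathbb{R}^{2n}$ with $z_i(t)=x_i(t)$ and $z_{n+i}(t)=y_i(t-1)$; it satisfies $\mathbf{z}(t+1)=P(t)\mathbf{z}(t)$, where $P(t)=\begin{bmatrix}P_{11}(t)&P_{12}(t)\\ P_{21}&P_{22}\end{bmatrix}$ with $n\times n$ blocks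 $[P_{11}(t)]_{ij}=\frac{1}{|\mathcal{N}_i(t)|+1}$ if $j=i$, $\frac{\phi}{|\mathcal{N}_i(t)|+1}$ if $j\in\mathcal{N}_i(t)$, $0$ otherwise; $[P_{12}(t)]_{ij}=\frac{(1-\phi)|\mathcal{N}_i(t)|}{(|\mathcal{N}_i(t)|+1)n}$ for all $i,j$; $P_{21}=\phi I_n$; $P_{22}=\frac{1-\phi}{n}\mathbf{1}_n\mathbf{1}_n^\top$. For a nonnegative $A\in\mathbb{R}^{m\times m}$, $\mathcal{G}(A)$ is the digraph on $\{1,\dots,m\}$ with a directed edge from $j$ to $i$ iff $a_{ij}>0$. *)

theory Defs
  imports "HOL-Analysis.Analysis"
begin

text \<open>Agents are indexed 0..n-1 (paper: 1..n). Opinions and actions are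
  functions nat => real, only the values at indices < n matter.\<close>

definition nbrs :: "nat \<Rightarrow> real \<Rightarrow> (nat \<Rightarrow> real) \<Rightarrow> (nat \<Rightarrow> real) \<Rightarrow> nat \<Rightarrow> nat set" where
  "nbrs n eps x y i = {j. j < n \<and> j \<noteq> i \<and> \<bar>x i - y j\<bar> \<le> eps}"

definition yavg :: "nat \<Rightarrow> (nat \<Rightarrow> real) \<Rightarrow> real" where
  "yavg n y = (\<Sum>k<n. y k) / real n"

definition step :: "nat \<Rightarrow> real \<Rightarrow> real \<Rightarrow> (nat \<Rightarrow> real) \<times> (nat \<Rightarrow> real)
    \<Rightarrow> (nat \<Rightarrow> real) \<times> (nat \<Rightarrow> real)" where
  "step n eps phi s =
     (let x = fst s; y = snd s;
          x' = (\<lambda>i. (x i + (\<Sum>j\<in>nbrs n eps x y i. y j)) / (real (card (nbrs n eps x y i)) + 1))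
      in (x', (\<lambda>i. phi * x' i + (1 - phi) * yavg n y)))"

primrec traj :: "nat \<Rightarrow> real \<Rightarrow> real \<Rightarrow> (nat \<Rightarrow> real) \<Rightarrow> (nat \<Rightarrow> real) \<Rightarrow> nat
    \<Rightarrow> (nat \<Rightarrow> real) \<times> (nat \<Rightarrow> real)" where
  "traj n eps phi x0 y0 0 = (x0, y0)"
| "traj n eps phi x0 y0 (Suc t) = step n eps phi (traj n eps phi x0 y0 t)"

definition xs :: "nat \<Rightarrow> real \<Rightarrow> real \<Rightarrow> (nat \<Rightarrow> real) \<Rightarrow> (nat \<Rightarrow> real) \<Rightarrow> nat \<Rightarrow> nat \<Rightarrow> real" where
  "xs n eps phi x0 y0 t = fst (traj n eps phi x0 y0 t)"

definition ys :: "nat \<Rightarrow> real \<Rightarrow> real \<Rightarrow> (nat \<Rightarrow> real) \<Rightarrow> (nat \<Rightarrow> real) \<Rightarrow> nat \<Rightarrow> nat \<Rightarrow> real" where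
  "ys n eps phi x0 y0 t = snd (traj n eps phi x0 y0 t)"

text \<open>Augmented state z(t), indices 0..2n-1: z_k(t) = x_k(t) for k < n,
  z_{n+i}(t) = y_i(t-1). (Meaningful for t >= 1; at t = 0 it uses y(0), irrelevant for limits.)\<close>
definition zs :: "nat \<Rightarrow> real \<Rightarrow> real \<Rightarrow> (nat \<Rightarrow> real) \<Rightarrow> (nat \<Rightarrow> real) \<Rightarrow> nat \<Rightarrow> nat \<Rightarrow> real" where
  "zs n eps phi x0 y0 t k =
     (if k < n then xs n eps phi x0 y0 t k else ys n eps phi x0 y0 (t - 1) (k - n))"

definition Pmat :: "nat \<Rightarrow> real \<Rightarrow> real \<Rightarrow> (nat \<Rightarrow> real) \<Rightarrow> (nat \<Rightarrow> real) \<Rightarrow> nat \<Rightarrow> nat \<Rightarrow> nat \<Rightarrow> real" where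
  "Pmat n eps phi x0 y0 t i j =
     (let N = (\<lambda>a. nbrs n eps (xs n eps phi x0 y0 t) (ys n eps phi x0 y0 t) a) in
      if i < n \<and> j < n then
        (if j = i then 1 / (real (card (N i)) + 1)
         else if j \<in> N i then phi / (real (card (N i)) + 1) else 0)
      else if i < n \<and> n \<le> j \<and> j < 2*n then
        (1 - phi) * real (card (N i)) / ((real (card (N i)) + 1) * real n)
      else if n \<le> i \<and> i < 2*n \<and> j < n then
        (if j = i - n then phi else 0)
      else if n \<le> i \<and> i < 2*n \<and> n \<le> j \<and> j < 2*n then
        (1 - phi) / real n
      else 0)"

definition graph_of :: "nat \<Rightarrow> (nat \<Rightarrow> nat \<Rightarrow> real) \<Rightarrow> (nat \<times> nat) set" where
  "graph_of m A = {(j, i). j < m \<and> i < m \<and> A i j > 0}"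

definition strongly_connected_on :: "nat \<Rightarrow> (nat \<times> nat) set \<Rightarrow> bool" where
  "strongly_connected_on m E = (\<forall>i<m. \<forall>j<m. (i, j) \<in> E\<^sup>*)"

end

theory Submission
  imports Defs
begin


lemma cross_edge:
  assumes "(a,b) \<in> E\<^sup>*" "a \<in> S" "b \<notin> S" shows "\<exists>u v. (u,v) \<in> E \<and> u \<in> S \<and> v \<notin> S"
  using assms by (induction rule: rtrancl_induct) auto

context
  fixes m :: nat and A :: "nat \<Rightarrow> nat \<Rightarrow> nat \<Rightarrow> real" and w :: "nat \<Rightarrow> nat \<Rightarrow> real"
    and tz :: nat and d :: real
  assumes m1: "m \<ge> 1" and dpos: "0 < d" and dle: "d \<le> 1"
   and stp: "\<And>t i. t \<ge> tz \<Longrightarrow> i < m \<Longrightarrow> w (Suc t) i = (\<Sum>j<m. A t i j * w t j)"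
   and nonneg: "\<And>t i j. t \<ge> tz \<Longrightarrow> i<m \<Longrightarrow> j<m \<Longrightarrow> 0 \<le> A t i j"
   and rows: "\<And>t i. t \<ge> tz \<Longrightarrow> i<m \<Longrightarrow> (\<Sum>j<m. A t i j) = 1"
   and lb: "\<And>t i j. t \<ge> tz \<Longrightarrow> i<m \<Longrightarrow> j<m \<Longrightarrow> 0 < A t i j \<Longrightarrow> d \<le> A t i j"
   and diag: "\<And>t i. t \<ge> tz \<Longrightarrow> i<m \<Longrightarrow> 0 < A t i i"
   and conn: "\<And>t i j. t \<ge> tz \<Longrightarrow> i<m \<Longrightarrow> j<m \<Longrightarrow> (i,j) \<in> (graph_of m (A t))\<^sup>*"
begin

definition "Mx t = Max (w t ` {..<m})"
definition "Mn t = Min (w t ` {..<m})"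

lemma Mx_ge: "i<m \<Longrightarrow> w t i \<le> Mx t"
  unfolding Mx_def by (rule Max_ge) auto
lemma Mn_le: "i<m \<Longrightarrow> Mn t \<le> w t i"
  unfolding Mn_def by (rule Min_le) auto
lemma Mx_in: "\<exists>i<m. w t i = Mx t"
proof -
  have "Mx t \<in> w t ` {..<m}" unfolding Mx_def by (rule Max_in) (use m1 in \<open>auto simp: lessThan_empty_iff\<close>)
  then show ?thesis by auto
qed
lemma Mn_in: "\<exists>i<m. w t i = Mn t"
proof -
  have "Mn t \<in> w t ` {..<m}" unfolding Mn_def by (rule Min_in) (use m1 in \<open>auto simp: lessThan_empty_iff\<close>)
  then show ?thesis by auto
qed
lemma D_nonneg: "0 \<le> Mx t - Mn t"
  using Mx_ge[of 0 t] Mn_le[of 0 t] m1 by auto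

lemma upd_le: assumes "t\<ge>tz" "i<m" "\<And>j. j<m \<Longrightarrow> w t j \<le> M" shows "w (Suc t) i \<le> M"
proof -
  have "w (Suc t) i = (\<Sum>j<m. A t i j * w t j)" using stp assms by simp
  also have "\<dots> \<le> (\<Sum>j<m. A t i j * M)"
    by (rule sum_mono) (use assms nonneg in \<open>auto intro: mult_left_mono\<close>)
  also have "\<dots> = M" using rows[OF assms(1,2)] by (simp add: sum_distrib_right[symmetric])
  finally show ?thesis .
qed

lemma upd_ge: assumes "t\<ge>tz" "i<m" "\<And>j. j<m \<Longrightarrow> M \<le> w t j" shows "M \<le> w (Suc t) i"
proof -
  have "M = (\<Sum>j<m. A t i j * M)" using rows[OF assms(1,2)] by (simp add: sum_distrib_right[symmetric])
  also have "\<dots> \<le> (\<Sum>j<m. A t i j * w t j)"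
    by (rule sum_mono) (use assms nonneg in \<open>auto intro: mult_left_mono\<close>)
  also have "\<dots> = w (Suc t) i" using stp assms by simp
  finally show ?thesis .
qed

lemma upd_le2: assumes "t\<ge>tz" "i<m" "\<And>j. j<m \<Longrightarrow> w t j \<le> M" "l<m" "w t l \<le> M - e"
  "0 \<le> e" "0 < A t i l" shows "w (Suc t) i \<le> M - d*e"
proof -
  have "w (Suc t) i = (\<Sum>j<m. A t i j * w t j)" using stp assms by simp
  also have "\<dots> \<le> (\<Sum>j<m. A t i j * M - (if j = l then A t i j * e else 0))"
    by (rule sum_mono) (use assms nonneg in \<open>auto intro: mult_left_mono simp: right_diff_distrib[symmetric]\<close>)
  also have "\<dots> = M - A t i l * e" using rows[OF assms(1,2)] assms(4)
    by (simp add: sum_subtractf sum_distrib_right[symmetric])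
  also have "\<dots> \<le> M - d*e" using lb[OF assms(1,2,4,7)] assms(6) by (simp add: mult_right_mono)
  finally show ?thesis .
qed

lemma bound_all: "s \<ge> tz \<Longrightarrow> j<m \<Longrightarrow> w (s+k) j \<le> Mx s"
proof (induction k arbitrary: j)
  case 0 then show ?case using Mx_ge by simp
next
  case (Suc k)
  have "w (Suc (s+k)) j \<le> Mx s" by (rule upd_le) (use Suc in auto)
  then show ?case by simp
qed

lemma bound_all2: "s \<ge> tz \<Longrightarrow> j<m \<Longrightarrow> Mn s \<le> w (s+k) j"
proof (induction k arbitrary: j)
  case 0 then show ?case using Mn_le by simp
next
  case (Suc k)
  have "Mn s \<le> w (Suc (s+k)) j" by (rule upd_ge) (use Suc in auto)
  then show ?case by simp
qed

definition "S s k = {i. i<m \<and> w (s+k) i \<le> Mx s - d^k * (Mx s - Mn s)}"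

lemma S_sub: "S s k \<subseteq> {..<m}" unfolding S_def by auto

lemma S_mono: assumes "s\<ge>tz" shows "S s k \<subseteq> S s (Suc k)"
proof
  fix i assume "i \<in> S s k"
  then have i: "i<m" "w (s+k) i \<le> Mx s - d^k * (Mx s - Mn s)" unfolding S_def by auto
  have "w (Suc (s+k)) i \<le> Mx s - d*(d^k * (Mx s - Mn s))"
  proof (rule upd_le2[OF _ i(1) _ i(1) i(2)])
    show "tz \<le> s + k" using assms by simp
    show "\<And>j. j < m \<Longrightarrow> w (s + k) j \<le> Mx s" using bound_all[OF assms] by blast
    show "0 \<le> d ^ k * (Mx s - Mn s)" using D_nonneg[of s] dpos by simp
    show "0 < A (s + k) i i" using diag[OF _ i(1), of "s+k"] assms by simp
  qed
  then show "i \<in> S s (Suc k)" using i unfolding S_def by (simp add: mult.assoc)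
qed

lemma S_grow: assumes "s\<ge>tz" "a \<in> S s k" "b<m" "b \<notin> S s k"
  shows "\<exists>v. v \<in> S s (Suc k) \<and> v \<notin> S s k"
proof -
  have "a < m" using assms(2) S_sub by auto
  then have "(a,b) \<in> (graph_of m (A (s+k)))\<^sup>*" using conn assms by simp
  then obtain u v where uv: "(u,v) \<in> graph_of m (A (s+k))" "u \<in> S s k" "v \<notin> S s k"
    using cross_edge[OF _ assms(2,4)] by blast
  then have uv2: "u<m" "v<m" "0 < A (s+k) v u" unfolding graph_of_def by auto
  have "w (Suc (s+k)) v \<le> Mx s - d*(d^k * (Mx s - Mn s))"
  proof (rule upd_le2[OF _ uv2(2) _ uv2(1) _ _ uv2(3)])
    show "tz \<le> s + k" using assms by simp
    show "\<And>j. j < m \<Longrightarrow> w (s + k) j \<le> Mx s" using bound_all[OF assms(1)] by blast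
    show "0 \<le> d ^ k * (Mx s - Mn s)" using D_nonneg[of s] dpos by simp
    show "w (s + k) u \<le> Mx s - d ^ k * (Mx s - Mn s)" using uv(2) by (simp add: S_def)
  qed
  then have "v \<in> S s (Suc k)" using uv2 unfolding S_def by (simp add: mult.assoc)
  then show ?thesis using uv by blast
qed

lemma S_card: assumes "s\<ge>tz" shows "min m (Suc k) \<le> card (S s k)"
proof (induction k)
  case 0
  obtain i where i: "i<m" "w s i = Mn s" using Mn_in by blast
  then have "i \<in> S s 0" unfolding S_def by simp
  moreover have "finite (S s 0)" using finite_subset[OF S_sub] by auto
  ultimately have "0 < card (S s 0)" by (auto simp: card_gt_0_iff)
  then show ?case by simp
next
  case (Suc k)
  have fin: "finite (S s (Suc k))" using finite_subset[OF S_sub] by auto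
  show ?case
  proof (cases "\<forall>i<m. i \<in> S s k")
    case True
    then have "{..<m} \<subseteq> S s (Suc k)" using S_mono[OF assms] by auto
    then have "card {..<m} \<le> card (S s (Suc k))" by (rule card_mono[OF fin])
    then have "m \<le> card (S s (Suc k))" by simp
    then show ?thesis by simp
  next
    case False
    then obtain b where b: "b<m" "b \<notin> S s k" by auto
    have "1 \<le> card (S s k)" using Suc.IH m1 by linarith
    then have "S s k \<noteq> {}" by (metis card.empty not_one_le_zero)
    then obtain a where "a \<in> S s k" by auto
    then obtain v where v: "v \<in> S s (Suc k)" "v \<notin> S s k" using S_grow[OF assms _ b] by blast
    have "insert v (S s k) \<subseteq> S s (Suc k)" using v S_mono[OF assms] by auto
    then have "card (insert v (S s k)) \<le> card (S s (Suc k))" using card_mono[OF fin] by blast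
    moreover have "card (insert v (S s k)) = Suc (card (S s k))"
      using v finite_subset[OF S_sub] by auto
    ultimately show ?thesis using Suc by linarith
  qed
qed

lemma S_full: assumes "s\<ge>tz" shows "S s m = {..<m}"
proof -
  have "m \<le> card (S s m)" using S_card[OF assms, of m] by simp
  moreover have "card (S s m) \<le> m" using card_mono[OF _ S_sub, of s m] by simp
  ultimately have "card (S s m) = card {..<m}" by simp
  then show ?thesis using card_subset_eq[OF _ S_sub] by blast
qed

lemma contract: assumes "s\<ge>tz" shows "Mx (s+m) - Mn (s+m) \<le> (1 - d^m) * (Mx s - Mn s)"
proof -
  obtain i where i: "i<m" "w (s+m) i = Mx (s+m)" using Mx_in by blast
  then have "i \<in> S s m" using S_full[OF assms] by auto
  then have 1: "Mx (s+m) \<le> Mx s - d^m * (Mx s - Mn s)" using i unfolding S_def by simp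
  obtain j where j: "j<m" "w (s+m) j = Mn (s+m)" using Mn_in by blast
  have 2: "Mn s \<le> Mn (s+m)" using bound_all2[OF assms j(1), of m] j by simp
  show ?thesis using 1 2 by (simp add: algebra_simps)
qed

lemma Mx_mono: assumes "tz \<le> s" "s \<le> s'" shows "Mx s' \<le> Mx s"
proof -
  obtain i where i: "i<m" "w s' i = Mx s'" using Mx_in by blast
  have "w (s + (s'-s)) i \<le> Mx s" by (rule bound_all[OF assms(1) i(1)])
  then show ?thesis using i assms(2) by simp
qed
lemma Mn_mono: assumes "tz \<le> s" "s \<le> s'" shows "Mn s \<le> Mn s'"
proof -
  obtain i where i: "i<m" "w s' i = Mn s'" using Mn_in by blast
  have "Mn s \<le> w (s + (s'-s)) i" by (rule bound_all2[OF assms(1) i(1)])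
  then show ?thesis using i assms(2) by simp
qed

lemma D_geom: "Mx (tz + k*m) - Mn (tz + k*m) \<le> (1-d^m)^k * (Mx tz - Mn tz)"
proof (induction k)
  case 0 then show ?case by simp
next
  case (Suc k)
  have g: "0 \<le> 1 - d^m" using dpos dle by (simp add: power_le_one)
  have "Mx (tz + Suc k*m) - Mn (tz + Suc k*m) = Mx ((tz + k*m) + m) - Mn ((tz + k*m) + m)"
    by (simp add: algebra_simps)
  also have "\<dots> \<le> (1 - d^m) * (Mx (tz + k*m) - Mn (tz + k*m))" by (rule contract) simp
  also have "\<dots> \<le> (1 - d^m) * ((1-d^m)^k * (Mx tz - Mn tz))" using Suc g by (rule mult_left_mono)
  finally show ?case by simp
qed

lemma D_lim: "(\<lambda>t. Mx t - Mn t) \<longlonglongrightarrow> 0"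
proof (rule LIMSEQ_I)
  fix r :: real assume r: "0 < r"
  have g: "0 \<le> 1 - d^m" "1 - d^m < 1" using dpos dle by (auto simp: power_le_one)
  have "(\<lambda>k. (1-d^m)^k * (Mx tz - Mn tz)) \<longlonglongrightarrow> 0 * (Mx tz - Mn tz)"
    by (intro tendsto_mult tendsto_const LIMSEQ_realpow_zero g)
  then obtain no where no: "\<And>k. k \<ge> no \<Longrightarrow> norm ((1-d^m)^k * (Mx tz - Mn tz) - 0) < r"
    using LIMSEQ_D r by fastforce
  show "\<exists>no. \<forall>n\<ge>no. norm (Mx n - Mn n - 0) < r"
  proof (intro exI allI impI)
    fix t assume t: "t \<ge> tz + no*m"
    have "Mx t - Mn t \<le> Mx (tz + no*m) - Mn (tz + no*m)"
      using Mx_mono[OF _ t] Mn_mono[OF _ t] by simp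
    also have "\<dots> \<le> (1-d^m)^no * (Mx tz - Mn tz)" by (rule D_geom)
    also have "\<dots> < r" using no[of no] g D_nonneg[of tz] by simp
    finally show "norm (Mx t - Mn t - 0) < r" using D_nonneg[of t] by simp
  qed
qed

lemma consensus_abs:
  "(\<forall>k<m. convergent (\<lambda>t. w t k)) \<and> (\<forall>i<m. \<forall>j<m. lim (\<lambda>t. w t i) = lim (\<lambda>t. w t j))"
proof -
  have "decseq (\<lambda>i. Mx (i + tz))" by (rule decseq_SucI) (simp add: Mx_mono)
  moreover have "\<forall>i. Mn tz \<le> Mx (i + tz)"
  proof
    fix i show "Mn tz \<le> Mx (i + tz)" using Mn_mono[of tz "i+tz"] D_nonneg[of "i+tz"] by simp
  qed
  ultimately obtain L where L: "(\<lambda>i. Mx (i + tz)) \<longlonglongrightarrow> L" by (rule decseq_convergent)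
  then have LM: "Mx \<longlonglongrightarrow> L" by (rule LIMSEQ_offset)
  have "(\<lambda>t. Mx t - (Mx t - Mn t)) \<longlonglongrightarrow> L - 0" by (intro tendsto_diff LM D_lim)
  then have LN: "Mn \<longlonglongrightarrow> L" by simp
  have conv: "(\<lambda>t. w t k) \<longlonglongrightarrow> L" if "k<m" for k
    by (rule real_tendsto_sandwich[OF _ _ LN LM]) (use that Mn_le Mx_ge in auto)
  have "convergent (\<lambda>t. w t k)" if "k<m" for k using conv[OF that] by (auto simp: convergent_def)
  moreover have "lim (\<lambda>t. w t k) = L" if "k<m" for k using conv[OF that] by (rule limI)
  ultimately show ?thesis by simp
qed

end


lemma sum_split2: "(\<Sum>j<2*n. g j) = (\<Sum>j<n. g j) + (\<Sum>k<n. g (n+k::nat)) "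
proof -
  have "(\<Sum>j<2*n. g j) = (\<Sum>j\<in>{0..<n}. g j) + (\<Sum>j\<in>{n..<n+n}. g j)"
    using sum.atLeastLessThan_concat[of 0 n "n+n" g] by (simp add: atLeast0LessThan mult_2)
  also have "(\<Sum>j\<in>{n..<n+n}. g j) = (\<Sum>k\<in>{0..<n}. g (k+n))"
    using sum.shift_bounds_nat_ivl[of g 0 n n] by simp
  finally show ?thesis by (simp add: atLeast0LessThan add.commute)
qed

lemma sum_if_delta:
  assumes "finite A" "i\<in>A" "N \<subseteq> A" "i \<notin> N"
  shows "(\<Sum>j\<in>A. (if j = i then a else if j \<in> N then b j else 0)) = a + (\<Sum>j\<in>N. b j)"
proof -
  have "(\<Sum>j\<in>A. (if j = i then a else if j \<in> N then b j else 0))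
      = (\<Sum>j\<in>A. (if j = i then a else 0) + (if j\<in>N then b j else 0))"
    by (rule sum.cong) (use assms in auto)
  also have "\<dots> = a + (\<Sum>j\<in>A \<inter> N. b j)"
    using assms by (simp add: sum.distrib sum.inter_restrict)
  also have "A \<inter> N = N" using assms by auto
  finally show ?thesis .
qed

lemma nbrs_props:
  "nbrs n eps x y i \<subseteq> {..<n}" "i \<notin> nbrs n eps x y i" "finite (nbrs n eps x y i)"
  "card (nbrs n eps x y i) \<le> n"
proof -
  show 1: "nbrs n eps x y i \<subseteq> {..<n}" unfolding nbrs_def by auto
  show "i \<notin> nbrs n eps x y i" unfolding nbrs_def by auto
  show "finite (nbrs n eps x y i)" using finite_subset[OF 1] by simp
  show "card (nbrs n eps x y i) \<le> n" using card_mono[OF _ 1] by simp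
qed

context
  fixes n :: nat and eps phi :: real and x0 y0 :: "nat \<Rightarrow> real"
begin

abbreviation "X \<equiv> xs n eps phi x0 y0"
abbreviation "Y \<equiv> ys n eps phi x0 y0"
abbreviation "NB t i \<equiv> nbrs n eps (X t) (Y t) i"
abbreviation "PP \<equiv> Pmat n eps phi x0 y0"
abbreviation "Z \<equiv> zs n eps phi x0 y0"

lemma xs_Suc: "X (Suc t) i = (X t i + (\<Sum>j\<in>NB t i. Y t j)) / (real (card (NB t i)) + 1)"
  by (simp add: xs_def ys_def step_def Let_def)

lemma ys_Suc: "Y (Suc t) i = phi * X (Suc t) i + (1-phi) * yavg n (Y t)"
  by (simp add: xs_def ys_def step_def Let_def)

lemma P_xx: "i<n \<Longrightarrow> j<n \<Longrightarrow> PP t i j = (if j = i then 1 / (real (card (NB t i)) + 1)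
         else if j \<in> NB t i then phi / (real (card (NB t i)) + 1) else 0)"
  by (simp add: Pmat_def Let_def)
lemma P_xy: "i<n \<Longrightarrow> k<n \<Longrightarrow> PP t i (n+k) =
   (1 - phi) * real (card (NB t i)) / ((real (card (NB t i)) + 1) * real n)"
  by (simp add: Pmat_def Let_def)
lemma P_yx: "i<n \<Longrightarrow> j<n \<Longrightarrow> PP t (n+i) j = (if j = i then phi else 0)"
  by (simp add: Pmat_def Let_def)
lemma P_yy: "i<n \<Longrightarrow> k<n \<Longrightarrow> PP t (n+i) (n+k) = (1 - phi) / real n"
  by (simp add: Pmat_def Let_def)

lemma Z_x: "j<n \<Longrightarrow> Z t j = X t j" by (simp add: zs_def)
lemma Z_y: "k<n \<Longrightarrow> Z t (n+k) = Y (t-1) k" by (simp add: zs_def)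

lemma F1_x: assumes "i<n" "n \<ge> 1"
  shows "Z (Suc (Suc t)) i = (\<Sum>j<2*n. PP (Suc t) i j * Z (Suc t) j)"
proof -
  define N where "N = NB (Suc t) i"
  define c where "c = real (card N)"
  have Nf: "finite N" "N \<subseteq> {..<n}" "i \<notin> N" using nbrs_props unfolding N_def by auto
  have "(\<Sum>j<2*n. PP (Suc t) i j * Z (Suc t) j)
      = (\<Sum>j<n. PP (Suc t) i j * X (Suc t) j) + (\<Sum>k<n. PP (Suc t) i (n+k) * Y t k)"
    by (simp add: sum_split2 Z_x Z_y)
  also have "(\<Sum>j<n. PP (Suc t) i j * X (Suc t) j)
     = (\<Sum>j<n. (if j = i then X (Suc t) i / (c+1) else if j \<in> N then phi * X (Suc t) j / (c+1) else 0))"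
    by (rule sum.cong) (auto simp: P_xx assms N_def c_def)
  also have "\<dots> = X (Suc t) i / (c+1) + (\<Sum>j\<in>N. phi * X (Suc t) j / (c+1))"
    by (rule sum_if_delta) (use Nf assms in auto)
  also have "(\<Sum>k<n. PP (Suc t) i (n+k) * Y t k) = (1 - phi) * c / ((c + 1) * real n) * (\<Sum>k<n. Y t k)"
    by (simp add: P_xy assms sum_distrib_left N_def c_def)
  finally have R: "(\<Sum>j<2*n. PP (Suc t) i j * Z (Suc t) j) =
     X (Suc t) i / (c+1) + (\<Sum>j\<in>N. phi * X (Suc t) j / (c+1)) +
     (1 - phi) * c / ((c + 1) * real n) * (\<Sum>k<n. Y t k)" .
  have "(\<Sum>j\<in>N. Y (Suc t) j) = phi * (\<Sum>j\<in>N. X (Suc t) j) + c * ((1-phi) * yavg n (Y t))"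
    by (simp add: ys_Suc sum.distrib sum_distrib_left c_def)
  then have L: "Z (Suc (Suc t)) i = (X (Suc t) i + phi * (\<Sum>j\<in>N. X (Suc t) j)
        + c * ((1-phi) * ((\<Sum>k<n. Y t k) / real n))) / (c+1)"
    using assms by (simp add: Z_x xs_Suc N_def c_def yavg_def)
  have c0: "0 \<le> c" unfolding c_def by simp
  have n0: "real n > 0" using assms by simp
  have e: "(\<Sum>j\<in>N. phi * X (Suc t) j / (c+1)) = phi * (\<Sum>j\<in>N. X (Suc t) j) / (c+1)"
    by (simp add: sum_divide_distrib[symmetric] sum_distrib_left)
  have c1: "c + 1 \<noteq> 0" using c0 by simp
  have alg: "\<And>a SX SY. (a + phi * SX + c * ((1-phi) * (SY / real n))) / (c+1)
     = a / (c+1) + phi * SX / (c+1) + (1 - phi) * c / ((c + 1) * real n) * SY"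
  proof -
    fix a SX SY
    have "c * ((1-phi) * (SY / real n)) / (c+1) = (1 - phi) * c / ((c + 1) * real n) * SY"
      by (simp add: divide_simps)
    then show "(a + phi * SX + c * ((1-phi) * (SY / real n))) / (c+1)
     = a / (c+1) + phi * SX / (c+1) + (1 - phi) * c / ((c + 1) * real n) * SY"
      by (simp add: add_divide_distrib)
  qed
  show ?thesis unfolding L R e by (rule alg)
qed

lemma F1_y: assumes "i<n" "n \<ge> 1"
  shows "Z (Suc (Suc t)) (n+i) = (\<Sum>j<2*n. PP (Suc t) (n+i) j * Z (Suc t) j)"
proof -
  have "(\<Sum>j<2*n. PP (Suc t) (n+i) j * Z (Suc t) j)
      = (\<Sum>j<n. PP (Suc t) (n+i) j * X (Suc t) j) + (\<Sum>k<n. PP (Suc t) (n+i) (n+k) * Y t k)"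
    by (simp add: sum_split2 Z_x Z_y)
  also have "(\<Sum>j<n. PP (Suc t) (n+i) j * X (Suc t) j) = (\<Sum>j<n. if j = i then phi * X (Suc t) i else 0)"
    by (rule sum.cong) (auto simp: P_yx assms)
  also have "\<dots> = phi * X (Suc t) i" using assms by simp
  also have "(\<Sum>k<n. PP (Suc t) (n+i) (n+k) * Y t k) = (1 - phi) / real n * (\<Sum>k<n. Y t k)"
    by (simp add: P_yy assms sum_distrib_left)
  finally show ?thesis using assms by (simp add: Z_y ys_Suc yavg_def)
qed

lemma F1: assumes "t \<ge> 1" "i < 2*n" "n \<ge> 1"
  shows "Z (Suc t) i = (\<Sum>j<2*n. PP t i j * Z t j)"
proof -
  obtain t' where t: "t = Suc t'" using assms(1) by (cases t) auto
  show ?thesis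
  proof (cases "i < n")
    case True then show ?thesis using F1_x[OF True assms(3)] t by simp
  next
    case False
    then obtain i' where "i = n + i'" "i' < n" using assms(2)
      by (metis add_diff_inverse_nat add_less_cancel_left mult_2)
    then show ?thesis using F1_y[OF _ assms(3), of i'] t by simp
  qed
qed

lemma blocks:
  assumes "\<And>i j. i<n \<Longrightarrow> j<n \<Longrightarrow> Q (PP t i j)"
    "\<And>i k. i<n \<Longrightarrow> k<n \<Longrightarrow> Q (PP t i (n+k))"
    "\<And>i j. i<n \<Longrightarrow> j<n \<Longrightarrow> Q (PP t (n+i) j)"
    "\<And>i k. i<n \<Longrightarrow> k<n \<Longrightarrow> Q (PP t (n+i) (n+k))"
    "i < 2*n" "j < 2*n"
  shows "Q (PP t i j)"
proof -
  have ci: "i < n \<or> (\<exists>i'. i = n + i' \<and> i' < n)"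
  proof (cases "i<n")
    case False then have "i = n + (i-n) \<and> i-n < n" using assms(5) by auto
    then show ?thesis by blast
  qed simp
  have cj: "j < n \<or> (\<exists>j'. j = n + j' \<and> j' < n)"
  proof (cases "j<n")
    case False then have "j = n + (j-n) \<and> j-n < n" using assms(6) by auto
    then show ?thesis by blast
  qed simp
  show ?thesis using ci cj assms(1-4) by auto
qed

lemma rows1: assumes "n \<ge> 1" "0 < phi" "phi < 1" "i < 2*n" shows "(\<Sum>j<2*n. PP t i j) = 1"
proof (cases "i < n")
  case True
  define N where "N = NB t i"
  define c where "c = real (card N)"
  have Nf: "finite N" "N \<subseteq> {..<n}" "i \<notin> N" using nbrs_props unfolding N_def by auto
  have "(\<Sum>j<2*n. PP t i j) = (\<Sum>j<n. PP t i j) + (\<Sum>k<n. PP t i (n+k))" by (rule sum_split2)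
  also have "(\<Sum>j<n. PP t i j) = (\<Sum>j<n. (if j = i then 1/(c+1) else if j \<in> N then phi/(c+1) else 0))"
    by (rule sum.cong) (auto simp: P_xx True N_def c_def)
  also have "\<dots> = 1/(c+1) + (\<Sum>j\<in>N. phi/(c+1))"
    by (rule sum_if_delta) (use Nf True in auto)
  also have "(\<Sum>k<n. PP t i (n+k)) = real n * ((1 - phi) * c / ((c + 1) * real n))"
    by (simp add: P_xy True N_def c_def)
  finally have e: "(\<Sum>j<2*n. PP t i j) = 1/(c+1) + c * (phi/(c+1)) + real n * ((1 - phi) * c / ((c + 1) * real n))"
    by (simp add: c_def)
  have c0: "0 \<le> c" unfolding c_def by simp
  have n0: "real n > 0" using assms by simp
  have e2: "real n * ((1 - phi) * c / ((c + 1) * real n)) = (1-phi)*c/(c+1)" using n0 by simp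
  have c1: "c + 1 \<noteq> 0" using c0 by simp
  have "1/(c+1) + c*(phi/(c+1)) + (1-phi)*c/(c+1) = (1 + c*phi + (1-phi)*c)/(c+1)"
    by (simp add: add_divide_distrib)
  also have "\<dots> = (c+1)/(c+1)" by (simp add: algebra_simps)
  also have "\<dots> = 1" using c1 by simp
  finally show ?thesis unfolding e e2 .
next
  case False
  then obtain i' where i': "i = n + i'" "i' < n" using assms(4)
    by (metis add_diff_inverse_nat add_less_cancel_left mult_2)
  have "(\<Sum>j<2*n. PP t i j) = (\<Sum>j<n. PP t i j) + (\<Sum>k<n. PP t i (n+k))" by (rule sum_split2)
  also have "(\<Sum>j<n. PP t i j) = (\<Sum>j<n. if j = i' then phi else 0)"
    by (rule sum.cong) (auto simp: P_yx i')
  also have "\<dots> = phi" using i' by simp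
  also have "(\<Sum>k<n. PP t i (n+k)) = real n * ((1-phi) / real n)" by (simp add: P_yy i')
  finally show ?thesis using assms by simp
qed

lemma nonneg1: assumes "n \<ge> 1" "0 < phi" "phi < 1" "i < 2*n" "j < 2*n" shows "0 \<le> PP t i j"
  by (rule blocks[OF _ _ _ _ assms(4,5)]) (use assms in \<open>auto simp: P_xx P_xy P_yx P_yy\<close>)

lemma diag1: assumes "n \<ge> 1" "0 < phi" "phi < 1" "i < 2*n" shows "0 < PP t i i"
proof (cases "i < n")
  case True then show ?thesis using assms by (simp add: P_xx add_pos_nonneg)
next
  case False
  then obtain i' where i': "i = n + i'" "i' < n" using assms(4)
    by (metis add_diff_inverse_nat add_less_cancel_left mult_2)
  then show ?thesis using assms by (simp add: P_yy)
qed

lemma lbhelp: "0 \<le> mu \<Longrightarrow> mu \<le> a \<Longrightarrow> 0 \<le> c \<Longrightarrow> c \<le> N \<Longrightarrow> mu/(2*(N+1)) \<le> a/(c+1)"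
  for mu a c N :: real
  by (rule frac_le) auto

lemma lb1: assumes "n \<ge> 1" "0 < phi" "phi < 1" "i < 2*n" "j < 2*n" "0 < PP t i j"
  shows "min phi (1-phi) / (2*(real n+1)) \<le> PP t i j"
proof -
  let ?mu = "min phi (1-phi)"
  have mu: "0 \<le> ?mu" "?mu \<le> phi" "?mu \<le> 1 - phi" "?mu \<le> 1" using assms by auto
  have n0: "real n \<ge> 1" using assms by simp
  have "?mu / (2*(real n+1)) \<le> ?mu / 1" by (rule divide_left_mono) (use mu n0 in auto)
  then have g: "?mu / (2*(real n+1)) \<le> ?mu" by simp
  have "0 < PP t i j \<longrightarrow> ?mu / (2*(real n+1)) \<le> PP t i j"
  proof (rule blocks[OF _ _ _ _ assms(4,5)])
    fix i j assume ij: "i<n" "j<n"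
    have cn: "real (card (NB t i)) \<le> real n" using nbrs_props(4) by simp
    show "0 < PP t i j \<longrightarrow> ?mu / (2*(real n+1)) \<le> PP t i j"
      using lbhelp[OF mu(1) mu(4) _ cn] lbhelp[OF mu(1) mu(2) _ cn] ij by (simp add: P_xx)
  next
    fix i k assume ik: "i<n" "k<n"
    define c where "c = real (card (NB t i))"
    show "0 < PP t i (n+k) \<longrightarrow> ?mu / (2*(real n+1)) \<le> PP t i (n+k)"
    proof
      assume "0 < PP t i (n+k)"
      then have "0 < c" using ik by (cases "card (NB t i) = 0") (auto simp: P_xy c_def)
      then have c1: "1 \<le> c" unfolding c_def by simp
      have h: "1/2 \<le> c/(c+1)" using c1 by (simp add: field_simps)
      have "?mu / (2*(real n+1)) \<le> (1-phi) / (2 * real n)"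
        by (rule frac_le) (use mu n0 in auto)
      also have "\<dots> = (1-phi) * (1/2) / real n" by simp
      also have "\<dots> \<le> (1-phi) * (c/(c+1)) / real n"
        using h assms n0 by (intro divide_right_mono mult_left_mono) auto
      also have "\<dots> = PP t i (n+k)" using ik by (simp add: P_xy c_def)
      finally show "?mu / (2*(real n+1)) \<le> PP t i (n+k)" .
    qed
  next
    fix i j assume "i<n" "j<n"
    then show "0 < PP t (n+i) j \<longrightarrow> ?mu / (2*(real n+1)) \<le> PP t (n+i) j"
      using g mu by (simp add: P_yx)
  next
    fix i k assume ik: "i<n" "k<n"
    have "?mu / (2*(real n+1)) \<le> (1-phi) / real n"
      by (rule frac_le) (use mu n0 in auto)
    then show "0 < PP t (n+i) (n+k) \<longrightarrow> ?mu / (2*(real n+1)) \<le> PP t (n+i) (n+k)"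
      using ik by (simp add: P_yy)
  qed
  then show ?thesis using assms(6) by simp
qed

end

theorem proposition2:
  fixes n :: nat and eps phi :: real and x0 y0 :: "nat \<Rightarrow> real" and T :: nat
  assumes "n \<ge> 1"
    and "0 \<le> eps" "eps \<le> 1"
    and "0 < phi" "phi < 1"
    and "\<And>i. i < n \<Longrightarrow> 0 \<le> x0 i \<and> x0 i \<le> 1"
    and "\<And>i. i < n \<Longrightarrow> 0 \<le> y0 i \<and> y0 i \<le> 1"
    and "T > 0"
    and "\<And>t. t \<ge> T \<Longrightarrow>
           strongly_connected_on (2*n) (graph_of (2*n) (Pmat n eps phi x0 y0 t))"
  shows "(\<forall>k < 2*n. convergent (\<lambda>t. zs n eps phi x0 y0 t k)) \<and>
         (\<forall>i < 2*n. \<forall>j < 2*n.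
            lim (\<lambda>t. zs n eps phi x0 y0 t i) = lim (\<lambda>t. zs n eps phi x0 y0 t j))"
proof -
  let ?d = "min phi (1-phi) / (2*(real n+1))"
  have mu: "0 < min phi (1-phi)" "min phi (1-phi) \<le> 1" using assms by auto
  have "?d \<le> min phi (1-phi) / 1" by (rule divide_left_mono) (use mu in auto)
  then have d1: "?d \<le> 1" using mu by simp
  have d0: "0 < ?d" using mu by simp
  show ?thesis
  proof (rule consensus_abs[where m="2*n" and A="Pmat n eps phi x0 y0" and w="zs n eps phi x0 y0"
        and tz=T and d="?d"])
    show "1 \<le> 2*n" using assms by simp
    show "0 < ?d" by (rule d0)
    show "?d \<le> 1" by (rule d1)
    show "zs n eps phi x0 y0 (Suc t) i = (\<Sum>j<2*n. Pmat n eps phi x0 y0 t i j * zs n eps phi x0 y0 t j)"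
      if "T \<le> t" "i < 2*n" for t i
      by (rule F1) (use that assms in auto)
    show "0 \<le> Pmat n eps phi x0 y0 t i j" if "T \<le> t" "i < 2*n" "j < 2*n" for t i j
      by (rule nonneg1) (use that assms in auto)
    show "(\<Sum>j<2*n. Pmat n eps phi x0 y0 t i j) = 1" if "T \<le> t" "i < 2*n" for t i
      by (rule rows1) (use that assms in auto)
    show "?d \<le> Pmat n eps phi x0 y0 t i j"
      if "T \<le> t" "i < 2*n" "j < 2*n" "0 < Pmat n eps phi x0 y0 t i j" for t i j
      by (rule lb1) (use that assms in auto)
    show "0 < Pmat n eps phi x0 y0 t i i" if "T \<le> t" "i < 2*n" for t i
      by (rule diag1) (use that assms in auto)
    show "(i, j) \<in> (graph_of (2*n) (Pmat n eps phi x0 y0 t))\<^sup>*"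
      if "T \<le> t" "i < 2*n" "j < 2*n" for t i j
      using assms(9)[OF that(1)] that(2,3) unfolding strongly_connected_on_def by blast
  qed
qed

end
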